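(* Let $\mathbb{F}$ be a field of characteristic $p>0$, let $q=p^k$ with $k>0$, let $m\ge 3$ be an integer dividing $q-1$, set $c=(q-1)/m$, and let $f\in\mathbb{F}[x]$ be a polynomial of degree $m$. Let $Y_f\subseteq\mathbb{P}^2$ be the curve $y^q+y=f(x)$, $\pi:C_f\to Y_f$ its normalization, $Q_\infty=\pi^{-1}(P_\infty)$ where $P_\infty$ is the unique pole of $x$, and let $X_f=\varphi(C_f)\subseteq\mathbb{P}^{c+1}$ be the image of the embedding $\varphi$ defined by the complete linear system $L(qQ_\infty)$. Then the space $H^0(\mathbb{P}^{c+1},\mathcal{I}_{X_f}(2))$ of quadric hypersurfaces containing $X_f$ has dimension $\binom{c+3}{2}-3c-3$.
   Context: $L(D)=H^0(C_f,\mathcal{O}_{C_f}(D))$. The space $L(qQ_\infty)$ has basis $\{1,x,y,\dots,y^c\}$ and defines an embedding $\varphi:C_f\to\mathbb{P}^{c+1}$. $\mathcal{I}_{X_f}$ is the ideal sheaf of $X_f$ in $\mathbb{P}^{c+1}$. *)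

theory Defs
  imports "HOL-Computational_Algebra.Polynomial" "HOL-Library.Function_Algebras"
begin

text \<open>Elements of F[x,y] are represented as polynomials in y whose coefficients are
polynomials in x, i.e. of type 'a poly poly.\<close>

definition polyX :: "'a::field poly poly" where
  "polyX = [:[:0, 1:]:]"

definition polyY :: "'a::field poly poly" where
  "polyY = monom 1 1"

definition curve_eqn :: "nat \<Rightarrow> 'a::field poly \<Rightarrow> 'a poly poly" where
  "curve_eqn q f = polyY ^ q + polyY - [:f:]"

text \<open>Homogeneous coordinates of the embedding phi given by the basis
1, x, y, ..., y^c of L(q Q_inf): z_0 = 1, z_1 = x, z_i = y^(i-1) for 2 <= i <= c+1.\<close>
definition emb_coord :: "nat \<Rightarrow> 'a::field poly poly" where
  "emb_coord i = (if i = 0 then 1 else if i = 1 then polyX else polyY ^ (i - 1))"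

text \<open>Quadratic forms in z_0, ..., z_(c+1): coefficient a i j of z_i z_j, with i <= j.\<close>
definition quad_forms :: "nat \<Rightarrow> (nat \<Rightarrow> nat \<Rightarrow> 'a::field) set" where
  "quad_forms c = {a. \<forall>i j. a i j \<noteq> 0 \<longrightarrow> i \<le> j \<and> j \<le> c + 1}"

definition quad_pullback :: "nat \<Rightarrow> (nat \<Rightarrow> nat \<Rightarrow> 'a::field) \<Rightarrow> 'a poly poly" where
  "quad_pullback c a =
     (\<Sum>i\<le>c+1. \<Sum>j\<le>c+1. [:[:a i j:]:] * emb_coord i * emb_coord j)"

text \<open>H^0(P^(c+1), I_{X_f}(2)): quadratic forms vanishing on X_f, i.e. whose pull-back
vanishes in the coordinate ring F[x,y]/(y^q + y - f(x)) of the (integral) curve.\<close>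
definition quadrics_containing :: "nat \<Rightarrow> nat \<Rightarrow> 'a::field poly \<Rightarrow> (nat \<Rightarrow> nat \<Rightarrow> 'a) set" where
  "quadrics_containing q c f =
     {a \<in> quad_forms c. curve_eqn q f dvd quad_pullback c a}"

definition scale_qf :: "'a::field \<Rightarrow> (nat \<Rightarrow> nat \<Rightarrow> 'a) \<Rightarrow> (nat \<Rightarrow> nat \<Rightarrow> 'a)" where
  "scale_qf r a = (\<lambda>i j. r * a i j)"

end

theory Submission
  imports Defs
begin

definition xd :: "nat \<Rightarrow> nat" where "xd i = (if i = 1 then 1 else 0)"
definition yd :: "nat \<Rightarrow> nat" where "yd i = (if i \<le> 1 then 0 else i - 1)"
definition mono :: "nat \<times> nat \<Rightarrow> nat \<times> nat" where
  "mono p = (yd (fst p) + yd (snd p), xd (fst p) + xd (snd p))"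
definition Cf :: "nat \<Rightarrow> (nat \<Rightarrow> nat \<Rightarrow> 'a::field) \<Rightarrow> nat \<Rightarrow> nat \<Rightarrow> 'a" where
  "Cf c a s t = (\<Sum>p\<in>{..Suc c}\<times>{..Suc c}. if mono p = (s,t) then a (fst p) (snd p) else 0)"

lemma monom10: "monom (1::'b::field poly) 0 = 1"
  by (simp add: monom_0 one_pCons)

lemma emb_coord_monom: "emb_coord i = monom (monom 1 (xd i)) (yd i)"
proof -
  have "i = 0 \<or> i = 1 \<or> i \<ge> 2" by linarith
  then show ?thesis
  proof (elim disjE)
    assume "i = 0" then show ?thesis by (simp add: emb_coord_def xd_def yd_def one_pCons monom_0)
  next
    assume "i = 1" then show ?thesis
      by (simp add: emb_coord_def xd_def yd_def polyX_def monom_0 monom_Suc)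
  next
    assume "i \<ge> 2" then show ?thesis
      by (simp add: emb_coord_def xd_def yd_def polyY_def monom_power monom10)
  qed
qed

lemma pullback_monom: "quad_pullback c a =
  (\<Sum>i\<le>c+1. \<Sum>j\<le>c+1. monom (monom (a i j) (xd i + xd j)) (yd i + yd j))"
  unfolding quad_pullback_def emb_coord_monom
  by (simp add: monom_0[symmetric] mult_monom)

lemma coeff_pullback: "coeff (coeff (quad_pullback c a) s) t = Cf c a s t"
proof -
  have cm: "\<And>r. coeff (coeff (monom (monom r u) v) s) t = (if mono (i,j) = (s,t) then r else 0)"
    if "u = xd i + xd j" "v = yd i + yd j" for i j u v
    using that by (auto simp: coeff_monom mono_def)
  show ?thesis
    unfolding pullback_monom Cf_def coeff_sum
    by (simp only: cm sum.cartesian_product case_prod_beta fst_conv snd_conv prod.collapse atMost_iff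
       add.commute[of c 1] Suc_eq_plus1_left[symmetric]) (simp add: case_prod_beta)
qed

lemma Cf_high: assumes "2*c < s" shows "Cf c a s t = 0"
proof -
  have "\<And>p. p \<in> {..Suc c}\<times>{..Suc c} \<Longrightarrow> mono p \<noteq> (s,t)"
    using assms by (auto simp: mono_def yd_def)
  then show ?thesis unfolding Cf_def by (intro sum.neutral) auto
qed

lemma pb_zero_iff: "quad_pullback c a = 0 \<longleftrightarrow> (\<forall>s t. Cf c a s t = 0)"
  by (simp add: poly_eq_iff coeff_pullback[symmetric])

lemma degree_pb: "degree (quad_pullback c a) \<le> 2*c"
proof (rule degree_le, intro allI impI)
  fix s assume "2*c < s"
  then show "coeff (quad_pullback c a) s = 0"
    by (simp add: poly_eq_iff coeff_pullback Cf_high)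
qed

lemma degree_curve: assumes "q \<ge> 2" shows "q \<le> degree (curve_eqn q f)"
proof (rule le_degree)
  have "coeff (curve_eqn q f) q = 1"
    using assms by (cases q) (simp_all add: curve_eqn_def polyY_def monom_power coeff_monom coeff_pCons mult_monom)
  then show "coeff (curve_eqn q f) q \<noteq> 0" by simp
qed

lemma K_iff: assumes "2*c < q" "q \<ge> 2"
  shows "a \<in> quadrics_containing q c f \<longleftrightarrow> a \<in> quad_forms c \<and> (\<forall>s t. Cf c a s t = 0)"
proof -
  have "curve_eqn q f dvd quad_pullback c a \<longleftrightarrow> quad_pullback c a = 0"
  proof
    assume d: "curve_eqn q f dvd quad_pullback c a"
    show "quad_pullback c a = 0"
    proof (rule ccontr)
      assume "quad_pullback c a \<noteq> 0"
      from dvd_imp_degree_le[OF d this] degree_pb[of c a] degree_curve[OF assms(2), of f] assms(1)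
      show False by linarith
    qed
  qed simp
  then show ?thesis unfolding quadrics_containing_def pb_zero_iff by auto
qed

lemma vs: "vector_space (scale_qf :: 'a::field \<Rightarrow> _)"
  by unfold_locales (auto simp: scale_qf_def fun_eq_iff algebra_simps)

lemma sum_apply2: "(sum F A) i j = sum (\<lambda>x. F x i j) A"
  by (induct A rule: infinite_finite_induct) auto

lemma Cf_diff: "Cf c (a - b) s t = Cf c a s t - Cf c b s t"
  unfolding Cf_def by (simp add: sum_subtractf[symmetric] if_distrib cong: if_cong)

lemma Cf_scale: "Cf c (scale_qf r a) s t = r * Cf c a s t"
  unfolding Cf_def by (simp add: sum_distrib_left scale_qf_def cong: if_cong) (intro sum.cong, auto)

lemma Cf_sum: "Cf c (sum F A) s t = (\<Sum>x\<in>A. Cf c (F x) s t)"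
proof -
  have e: "\<And>p. (if mono p = (s,t) then (\<Sum>x\<in>A. F x (fst p) (snd p)) else 0)
     = (\<Sum>x\<in>A. if mono p = (s,t) then F x (fst p) (snd p) else 0)" by simp
  show ?thesis unfolding Cf_def sum_apply2 e by (rule sum.swap)
qed

definition ind :: "nat \<times> nat \<Rightarrow> nat \<Rightarrow> nat \<Rightarrow> 'a::field" where
  "ind p = (\<lambda>i j. if (i,j) = p then 1 else 0)"

lemma Cf_ind: assumes "p0 \<in> {..Suc c}\<times>{..Suc c}"
  shows "Cf c (ind p0) s t = (if mono p0 = (s,t) then 1 else 0)"
proof -
  have "Cf c (ind p0) s t = (\<Sum>p\<in>{..Suc c}\<times>{..Suc c}. if p = p0 then (if mono p0 = (s,t) then 1 else 0) else 0)"
    unfolding Cf_def ind_def by (intro sum.cong) auto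
  also have "\<dots> = (if mono p0 = (s,t) then 1 else 0)"
    using assms by (simp add: sum.delta')
  finally show ?thesis .
qed

definition rep :: "nat \<Rightarrow> nat \<Rightarrow> nat \<times> nat" where
  "rep c s = (if s \<le> c then (0, s+1) else (s-c+1, Suc c))"

definition Pset :: "nat \<Rightarrow> (nat \<times> nat) set" where
  "Pset c = {(i,j). 2 \<le> i \<and> i \<le> j \<and> j \<le> c}"

definition bq :: "nat \<Rightarrow> nat \<times> nat \<Rightarrow> nat \<Rightarrow> nat \<Rightarrow> 'a::field" where
  "bq c p = ind p - ind (rep c (fst p + snd p - 2))"

lemma rep_props:
  assumes "p \<in> Pset c" and "r = rep c (fst p + snd p - 2)"
  shows "r \<in> {..Suc c}\<times>{..Suc c}" "fst r \<le> snd r" "mono r = mono p" "r \<noteq> p" "r \<notin> Pset c"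
  using assms by (auto simp: rep_def Pset_def mono_def xd_def yd_def split: if_splits)

lemma Pset_dom: "p \<in> Pset c \<Longrightarrow> p \<in> {..Suc c}\<times>{..Suc c}"
  by (auto simp: Pset_def)

lemma bq_quad: assumes "p \<in> Pset c" shows "bq c p \<in> quad_forms c"
  using rep_props[OF assms refl] assms
  unfolding quad_forms_def bq_def ind_def Pset_def
  by (auto split: if_splits)

lemma bq_Cf: assumes "p \<in> Pset c" shows "Cf c (bq c p) s t = 0"
  using rep_props[OF assms refl] Pset_dom[OF assms]
  unfolding bq_def by (simp add: Cf_diff Cf_ind)

lemma bq_at: assumes "p \<in> Pset c" "p' \<in> Pset c"
  shows "bq c p (fst p') (snd p') = (if p' = p then 1 else 0)"
  using rep_props[OF assms(1) refl] assms(2)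
  unfolding bq_def ind_def by auto

lemma finite_Pset: "finite (Pset c)"
  by (rule finite_subset[of _ "{..c}\<times>{..c}"]) (auto simp: Pset_def)

lemma inj_bq: "inj_on (bq c :: _ \<Rightarrow> _ \<Rightarrow> _ \<Rightarrow> 'a::field) (Pset c)"
proof (rule inj_onI)
  fix p p' assume a: "p \<in> Pset c" "p' \<in> Pset c" "(bq c p :: _ \<Rightarrow> _ \<Rightarrow> 'a) = bq c p'"
  then have "(bq c p :: _ \<Rightarrow> _ \<Rightarrow> 'a) (fst p') (snd p') = bq c p' (fst p') (snd p')" by simp
  then show "p = p'" using bq_at[OF a(1) a(2)] bq_at[OF a(2) a(2)] by (metis zero_neq_one)
qed

definition minv :: "nat \<Rightarrow> nat \<times> nat \<Rightarrow> nat \<times> nat" where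
  "minv c st = (if snd st = 2 then (1,1) else if snd st = 1 then (if fst st = 0 then (0,1) else (1, fst st + 1))
     else if fst st = 0 then (0,0) else if fst st \<le> c then (0, fst st + 1) else (fst st - c + 1, Suc c))"

lemma minv_mono:
  assumes "p \<in> {..Suc c}\<times>{..Suc c}" "fst p \<le> snd p" "p \<notin> Pset c"
  shows "minv c (mono p) = p"
proof (cases p)
  case (Pair i j)
  have "i = 0 \<or> i = 1 \<or> (2 \<le> i \<and> j = Suc c)" using assms Pair by (auto simp: Pset_def)
  moreover have "j \<le> Suc c" "i \<le> j" using assms Pair by auto
  ultimately show ?thesis unfolding Pair
  proof (elim disjE)
    assume "i = 0" "j \<le> Suc c" "i \<le> j"
    then show "minv c (mono (i, j)) = (i, j)"
      by (cases "j = 0"; cases "j = 1") (simp_all add: minv_def mono_def xd_def yd_def)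
  next
    assume "i = 1" "j \<le> Suc c" "i \<le> j"
    then show "minv c (mono (i, j)) = (i, j)"
      by (cases "j = 1") (simp_all add: minv_def mono_def xd_def yd_def)
  next
    assume a: "2 \<le> i \<and> j = Suc c" "j \<le> Suc c" "i \<le> j"
    then have "\<not> i + c - Suc 0 \<le> c" by linarith
    with a show "minv c (mono (i, j)) = (i, j)"
      by (simp add: minv_def mono_def xd_def yd_def)
  qed
qed

lemma mono_inj_nonP:
  assumes "p \<in> {..Suc c}\<times>{..Suc c}" "p' \<in> {..Suc c}\<times>{..Suc c}"
    "fst p \<le> snd p" "fst p' \<le> snd p'" "p \<notin> Pset c" "p' \<notin> Pset c" "mono p = mono p'"
  shows "p = p'"
  using minv_mono[OF assms(1,3,5)] minv_mono[OF assms(2,4,6)] assms(7) by metis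

lemma zero_lemma:
  assumes g: "g \<in> quad_forms c" and C: "\<forall>s t. Cf c g s t = 0"
    and P: "\<forall>p\<in>Pset c. g (fst p) (snd p) = 0"
  shows "g = 0"
proof (intro ext)
  fix i0 j0
  show "g i0 j0 = 0 i0 j0"
  proof (cases "i0 \<le> j0 \<and> j0 \<le> c + 1")
    case False then show ?thesis using g unfolding quad_forms_def by auto
  next
    case True
    show ?thesis
    proof (cases "(i0,j0) \<in> Pset c")
      case True then show ?thesis using P by auto
    next
      case nP: False
      let ?p0 = "(i0,j0)"
      have dom: "?p0 \<in> {..Suc c}\<times>{..Suc c}" using True by auto
      have "0 = Cf c g (fst (mono ?p0)) (snd (mono ?p0))" using C by simp
      also have "\<dots> = (\<Sum>p\<in>{..Suc c}\<times>{..Suc c}. if p = ?p0 then g i0 j0 else 0)"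
        unfolding Cf_def
      proof (intro sum.cong refl)
        fix p assume pd: "p \<in> {..Suc c}\<times>{..Suc c}"
        show "(if mono p = (fst (mono ?p0), snd (mono ?p0)) then g (fst p) (snd p) else 0)
              = (if p = ?p0 then g i0 j0 else 0)"
        proof (cases "p = ?p0")
          case True then show ?thesis by simp
        next
          case ne: False
          have "mono p = mono ?p0 \<Longrightarrow> g (fst p) (snd p) = 0"
          proof -
            assume mm: "mono p = mono ?p0"
            show ?thesis
            proof (cases "fst p \<le> snd p")
              case False then show ?thesis using g unfolding quad_forms_def by auto
            next
              case le: True
              show ?thesis
              proof (cases "p \<in> Pset c")
                case True then show ?thesis using P by auto
              next
                case False
                from mono_inj_nonP[OF pd dom le _ False nP mm] True ne show ?thesis by auto
              qed
            qed
          qed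
          then show ?thesis using ne by auto
        qed
      qed
      also have "\<dots> = g i0 j0" using dom by (simp add: sum.delta')
      finally show ?thesis by simp
    qed
  qed
qed

lemma card_Pset: "card (Pset c) + 3*c + 3 = (c+3 choose 2)"
proof (induct c)
  case 0
  have "Pset 0 = {}" by (auto simp: Pset_def)
  then show ?case by (simp add: numeral_3_eq_3 numeral_2_eq_2)
next
  case (Suc c)
  have e: "Pset (Suc c) = Pset c \<union> (\<lambda>i. (i, Suc c)) ` {2..Suc c}"
    by (auto simp: Pset_def)
  have d: "Pset c \<inter> (\<lambda>i. (i, Suc c)) ` {2..Suc c} = {}" by (auto simp: Pset_def)
  have "card ((\<lambda>i. (i, Suc c)) ` {2..Suc c}) = c"
    by (subst card_image) (auto simp: inj_on_def)
  then have "card (Pset (Suc c)) = card (Pset c) + c"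
    unfolding e by (subst card_Un_disjoint) (auto simp: finite_Pset d)
  moreover have "(Suc c + 3 choose 2) = (c + 3 choose 2) + (c + 3)"
    by (simp add: numeral_3_eq_3 numeral_2_eq_2)
  ultimately show ?case using Suc by simp
qed

theorem corollary3p5:
  fixes f :: "'a::field poly" and p k q m c :: nat
  assumes "prime p" and "CHAR('a) = p"
    and "k > 0" and "q = p ^ k"
    and "m \<ge> 3" and "m dvd q - 1" and "c = (q - 1) div m"
    and "degree f = m"
  shows "vector_space.dim scale_qf (quadrics_containing q c f)
           = (c + 3 choose 2) - 3 * c - 3"
proof -
  interpret V: vector_space "scale_qf :: 'a \<Rightarrow> _" by (rule vs)
  have "p \<ge> 2" using assms(1) by (rule prime_ge_2_nat)
  moreover have "p \<le> p ^ k" using assms(3) \<open>p \<ge> 2\<close> by (simp add: self_le_power)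
  ultimately have q2: "q \<ge> 2" using assms(4) by simp
  have "q - 1 = m * c" using assms(6,7) by simp
  then have qc: "2 * c < q" using assms(5) q2
    by (metis Suc_diff_1 add_leD1 le_trans less_Suc_eq_le mult_le_mono1 not_numeral_le_zero numeral_Bit1 numeral_One one_add_one order.strict_implies_order zero_less_iff_neq_zero) 
  define K where "K = quadrics_containing q c f"
  define B where "B = (bq c :: _ \<Rightarrow> _ \<Rightarrow> _ \<Rightarrow> 'a) ` Pset c"
  have Kiff: "\<And>a. a \<in> K \<longleftrightarrow> a \<in> quad_forms c \<and> (\<forall>s t. Cf c a s t = 0)"
    unfolding K_def by (rule K_iff[OF qc q2])
  have BK: "B \<subseteq> K" unfolding B_def by (auto simp: Kiff bq_quad bq_Cf)
  have ind: "V.independent B"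
    unfolding V.independent_explicit_module
  proof (intro allI impI)
    fix t u v assume t: "finite t" "t \<subseteq> B" "(\<Sum>v\<in>t. scale_qf (u v) v) = 0" "v \<in> t"
    then obtain p0 where p0: "p0 \<in> Pset c" "v = bq c p0" unfolding B_def by blast
    have "0 = (\<Sum>w\<in>t. scale_qf (u w) w) (fst p0) (snd p0)" using t(3) by simp
    also have "\<dots> = (\<Sum>w\<in>t. if w = v then u v else 0)"
      unfolding sum_apply2
    proof (intro sum.cong refl)
      fix w assume "w \<in> t"
      then obtain p where p: "p \<in> Pset c" "w = bq c p" using t(2) unfolding B_def by blast
      have "(w = v) = (p = p0)" using inj_bq[of c] p p0 unfolding inj_on_def by auto
      then show "scale_qf (u w) w (fst p0) (snd p0) = (if w = v then u v else 0)"
        using bq_at[OF p(1) p0(1)] p by (auto simp: scale_qf_def)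
    qed
    also have "\<dots> = u v" using t by (simp add: sum.delta')
    finally show "u v = 0" by simp
  qed
  have sp: "K \<subseteq> V.span B"
  proof
    fix a assume aK: "a \<in> K"
    define S where "S = (\<Sum>p\<in>Pset c. scale_qf (a (fst p) (snd p)) (bq c p :: _ \<Rightarrow> _ \<Rightarrow> 'a))"
    have SB: "S \<in> V.span B" unfolding S_def B_def
      by (intro V.span_sum V.span_scale V.span_base) auto
    have Sij: "S i j = (\<Sum>p\<in>Pset c. a (fst p) (snd p) * bq c p i j)" for i j
      unfolding S_def sum_apply2 by (simp add: scale_qf_def)
    have "a - S = 0"
    proof (rule zero_lemma)
      show "a - S \<in> quad_forms c" unfolding quad_forms_def
      proof (intro CollectI allI impI)
        fix i j assume nz: "(a - S) i j \<noteq> 0"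
        show "i \<le> j \<and> j \<le> c + 1"
        proof (rule ccontr)
          assume n: "\<not> (i \<le> j \<and> j \<le> c + 1)"
          have "a i j = 0" using aK n unfolding Kiff quad_forms_def by auto
          moreover have "S i j = 0" unfolding Sij
          proof (intro sum.neutral ballI)
            fix p assume "p \<in> Pset c"
            then have "bq c p \<in> quad_forms c" by (rule bq_quad)
            then have "(bq c p :: _ \<Rightarrow> _ \<Rightarrow> 'a) i j = 0" using n unfolding quad_forms_def by blast
            then show "a (fst p) (snd p) * bq c p i j = 0" by simp
          qed
          ultimately show False using nz by simp
        qed
      qed
      show "\<forall>s t. Cf c (a - S) s t = 0"
        using aK unfolding Kiff by (simp add: Cf_diff S_def Cf_sum Cf_scale bq_Cf)
      show "\<forall>p\<in>Pset c. (a - S) (fst p) (snd p) = 0"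
      proof
        fix p0 assume p0: "p0 \<in> Pset c"
        have "S (fst p0) (snd p0) = (\<Sum>p\<in>Pset c. if p = p0 then a (fst p0) (snd p0) else 0)"
          unfolding Sij by (intro sum.cong refl) (auto simp: bq_at p0)
        also have "\<dots> = a (fst p0) (snd p0)" using p0 finite_Pset by (simp add: sum.delta')
        finally show "(a - S) (fst p0) (snd p0) = 0" by simp
      qed
    qed
    then have "a = S" by simp
    then show "a \<in> V.span B" using SB by simp
  qed
  have "card B = V.dim K" by (rule V.basis_card_eq_dim[OF BK sp ind])
  moreover have "card B = card (Pset c)" unfolding B_def by (rule card_image[OF inj_bq])
  ultimately show ?thesis using card_Pset[of c] unfolding K_def by simp
qed

end
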